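(* Let $\Omega\subset\mathbb{R}^3$ be a bounded domain with $C^2$ boundary satisfying the uniform circumscribed sphere condition with radius $R$. Then $$|x-q^+(x,v)|\lesssim R\,N(x,v)$$ for all $v\in\mathbb{R}^3\setminus\{0\}$ and all $x\in\Gamma^-_v:=\{x\in\partial\Omega: n(x)\cdot v<0\}$, with an absolute implicit constant.
   Context: $n(x)$ is the outward unit normal at $x\in\partial\Omega$. $N(x,v)=-n(q(x,v))\cdot\frac{v}{|v|}$, where $q(x,v)=x-\tau_{x,v}v$ is the backward exit point; for $x\in\partial\Omega$ with $n(x)\cdot v<0$ this gives $q(x,v)=x$ and $N(x,v)=-n(x)\cdot v/|v|$. $q^+(x,v)$ denotes the point where the ray $\{x+sv:s>0\}$ leaves $\Omega$, i.e. the other endpoint of the chord of $\bar\Omega$ through $x$ in direction $v$. Uniform circumscribed sphere condition with radius $R$: every $x\in\partial\Omega$ lies on $\partial B_R$ for some ball $B_R$ of radius $R$ with $\bar\Omega\subset\bar B_R$. *)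

theory Defs
  imports "HOL-Analysis.Analysis"
begin

definition C2_local_defining ::
  "(real^3) set \<Rightarrow> (real^3) set \<Rightarrow> (real^3 \<Rightarrow> real) \<Rightarrow> (real^3 \<Rightarrow> real^3) \<Rightarrow> bool" where
  "C2_local_defining \<Omega> U \<rho> g \<longleftrightarrow>
     open U \<and>
     (\<forall>y\<in>U. (\<rho> has_derivative (\<lambda>h. g y \<bullet> h)) (at y)) \<and>
     (\<exists>g'. (\<forall>y\<in>U. (g has_derivative g' y) (at y)) \<and> (\<forall>h. continuous_on U (\<lambda>y. g' y h))) \<and>
     (\<forall>y\<in>U. g y \<noteq> 0) \<and>
     \<Omega> \<inter> U = {y\<in>U. \<rho> y < 0}"

definition C2_boundary :: "(real^3) set \<Rightarrow> bool" where
  "C2_boundary \<Omega> \<longleftrightarrow> (\<forall>x\<in>frontier \<Omega>. \<exists>U \<rho> g. x \<in> U \<and> C2_local_defining \<Omega> U \<rho> g)"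

definition outward_unit_normal :: "(real^3) set \<Rightarrow> (real^3 \<Rightarrow> real^3) \<Rightarrow> bool" where
  "outward_unit_normal \<Omega> n \<longleftrightarrow>
     (\<forall>x\<in>frontier \<Omega>. \<exists>U \<rho> g. x \<in> U \<and> C2_local_defining \<Omega> U \<rho> g \<and> n x = (1 / norm (g x)) *\<^sub>R g x)"

definition bounded_domain :: "(real^3) set \<Rightarrow> bool" where
  "bounded_domain \<Omega> \<longleftrightarrow> open \<Omega> \<and> connected \<Omega> \<and> bounded \<Omega> \<and> \<Omega> \<noteq> {}"

definition circumscribed_sphere_cond :: "(real^3) set \<Rightarrow> real \<Rightarrow> bool" where
  "circumscribed_sphere_cond \<Omega> R \<longleftrightarrow>
     (\<forall>x\<in>frontier \<Omega>. \<exists>c. dist x c = R \<and> closure \<Omega> \<subseteq> cball c R)"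

definition q_plus :: "(real^3) set \<Rightarrow> real^3 \<Rightarrow> real^3 \<Rightarrow> real^3" where
  "q_plus \<Omega> x v = x + (Inf {t. t > 0 \<and> x + t *\<^sub>R v \<notin> \<Omega>}) *\<^sub>R v"

text \<open>N(x,v) for x on the boundary with n(x)\<cdot>v < 0 (then q(x,v) = x).\<close>
definition N_fun :: "(real^3 \<Rightarrow> real^3) \<Rightarrow> real^3 \<Rightarrow> real^3 \<Rightarrow> real" where
  "N_fun n x v = - (n x \<bullet> v) / norm v"

end

theory Submission imports Defs begin

lemma aux1: "(e::real)>0 \<Longrightarrow> (n::real) \<ge> 0 \<Longrightarrow> e / (2*(n+1)) * n < e"
proof -
  assume a: "e>0" "n\<ge>0"
  have "e * n < e * (2*(n+1))" using a by (intro mult_strict_left_mono) auto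
  thus ?thesis using a by (simp add: pos_divide_less_eq)
qed

lemma aux3: "((f::real\<Rightarrow>real) has_derivative (\<lambda>s. s * k)) F \<Longrightarrow> (f has_real_derivative k) F"
proof -
  assume a: "(f has_derivative (\<lambda>s. s * k)) F"
  have e: "(\<lambda>s::real. s * k) = (*) k" by (auto simp: fun_eq_iff)
  show ?thesis unfolding has_field_derivative_def using a e by metis
qed
lemma aux2: fixes g w :: "real^3" shows "g \<noteq> 0 \<Longrightarrow> ((1 / norm g) *\<^sub>R g) \<bullet> w < 0 \<Longrightarrow> g \<bullet> w < 0"
proof -
  assume "g \<noteq> 0" "((1 / norm g) *\<^sub>R g) \<bullet> w < 0"
  hence "(g \<bullet> w) / norm g < 0" by simp
  thus ?thesis by (simp add: divide_less_0_iff)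
qed

lemma rho_zero:
  assumes "open \<Omega>" "x \<in> frontier \<Omega>" "C2_local_defining \<Omega> U \<rho> g" "x \<in> U"
  shows "\<rho> x = 0"
proof -
  have U: "open U" and d: "(\<rho> has_derivative (\<lambda>h. g x \<bullet> h)) (at x)" and eq: "\<Omega> \<inter> U = {y\<in>U. \<rho> y < 0}"
    using assms(3,4) unfolding C2_local_defining_def by auto
  have xn: "x \<notin> \<Omega>" using assms(1,2) by (simp add: frontier_def interior_open)
  hence "\<not> \<rho> x < 0" using eq assms(4) by auto
  moreover have "\<not> \<rho> x > 0"
  proof
    assume pos: "\<rho> x > 0"
    have "isCont \<rho> x" using d has_derivative_continuous by blast
    then obtain dd where dd: "dd > 0" "\<forall>y. dist y x < dd \<longrightarrow> dist (\<rho> y) (\<rho> x) < \<rho> x"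
      using pos unfolding continuous_at_eps_delta by blast
    obtain e where e: "e > 0" "ball x e \<subseteq> U" using U assms(4) open_contains_ball by blast
    have "x \<in> closure \<Omega>" using assms(2) by (simp add: frontier_def)
    then obtain y where y: "y \<in> \<Omega>" "dist y x < min dd e"
      using closure_approachable dd e by (metis min_less_iff_conj)
    have "y \<in> U" using y e by (auto simp: dist_commute)
    hence "\<rho> y < 0" using eq y by auto
    moreover have "dist (\<rho> y) (\<rho> x) < \<rho> x" using dd y by auto
    ultimately show False by (simp add: dist_real_def)
  qed
  ultimately show ?thesis by linarith
qed

lemma inner_dir:
  assumes "open \<Omega>" "x \<in> frontier \<Omega>" "C2_local_defining \<Omega> U \<rho> g" "x \<in> U"
    "closure \<Omega> \<subseteq> cball c R" "dist x c = R" "g x \<bullet> w < 0"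
  shows "(x - c) \<bullet> w \<le> 0"
proof -
  have U: "open U" and d: "(\<rho> has_derivative (\<lambda>h. g x \<bullet> h)) (at x)" and eq: "\<Omega> \<inter> U = {y\<in>U. \<rho> y < 0}"
    using assms(3,4) unfolding C2_local_defining_def by auto
  have r0: "\<rho> x = 0" using rho_zero assms(1-4) by blast
  have l: "((\<lambda>s::real. x + s *\<^sub>R w) has_derivative (\<lambda>s. s *\<^sub>R w)) (at 0)"
    by (auto intro!: derivative_eq_intros)
  have d': "(\<rho> has_derivative (\<lambda>h. g x \<bullet> h)) (at (x + 0 *\<^sub>R w))" using d by simp
  have "((\<lambda>s. \<rho> (x + s *\<^sub>R w)) has_derivative (\<lambda>s. g x \<bullet> (s *\<^sub>R w))) (at 0)"
    using has_derivative_compose[OF l d'] .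
  hence "((\<lambda>s. \<rho> (x + s *\<^sub>R w)) has_derivative (\<lambda>s. s * (g x \<bullet> w))) (at 0)" by simp
  hence "((\<lambda>s. \<rho> (x + s *\<^sub>R w)) has_real_derivative (g x \<bullet> w)) (at 0)" by (rule aux3)
  from DERIV_neg_dec_right[OF this assms(7)] obtain d1 where
    d1': "d1 > 0" "\<forall>h>0. h < d1 \<longrightarrow> \<rho> (x + 0 *\<^sub>R w) > \<rho> (x + (0 + h) *\<^sub>R w)"
    by blast
  have d1: "d1 > 0" "\<forall>h>0. h < d1 \<longrightarrow> \<rho> (x + h *\<^sub>R w) < 0"
    using d1' r0 by auto
  obtain e where e: "e > 0" "ball x e \<subseteq> U" using U assms(4) open_contains_ball by blast
  show ?thesis
  proof (rule ccontr)
    assume neg: "\<not> (x - c) \<bullet> w \<le> 0"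
    define s where "s = min (d1/2) (e / (2 * (norm w + 1)))"
    have s0: "s > 0" unfolding s_def using d1(1) e(1) norm_ge_zero[of w]
      by (simp add: divide_pos_pos add_nonneg_pos)
    have "s * norm w < e"
    proof -
      have "s * norm w \<le> (e / (2 * (norm w + 1))) * norm w"
        unfolding s_def by (intro mult_right_mono) auto
      also have "\<dots> < e" using e(1) by (intro aux1) auto
      finally show ?thesis .
    qed
    hence "x + s *\<^sub>R w \<in> U" using e s0 by (auto simp: dist_norm)
    moreover have "\<rho> (x + s *\<^sub>R w) < 0" using d1 s0 by (simp add: s_def)
    ultimately have "x + s *\<^sub>R w \<in> \<Omega>" using eq by auto
    hence "x + s *\<^sub>R w \<in> cball c R" using assms(5) closure_subset by blast
    hence "norm ((x - c) + s *\<^sub>R w) \<le> norm (x - c)"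
      using assms(6) by (simp add: dist_norm norm_minus_commute algebra_simps)
    moreover define a where "a = x - c"
    ultimately have "norm (a + s *\<^sub>R w) \<le> norm a" by simp
    hence "(a + s *\<^sub>R w) \<bullet> (a + s *\<^sub>R w) \<le> a \<bullet> a" by (simp add: norm_le)
    moreover have "(a + s *\<^sub>R w) \<bullet> (a + s *\<^sub>R w) = a \<bullet> a + 2 * s * (a \<bullet> w) + s^2 * (w \<bullet> w)"
      by (simp add: inner_add_left inner_add_right inner_commute power2_eq_square algebra_simps)
    ultimately have "2 * s * ((x - c) \<bullet> w) + s^2 * (w \<bullet> w) \<le> 0" by (simp add: a_def)
    moreover have "s^2 * (w \<bullet> w) \<ge> 0" by simp
    moreover have "2 * s * ((x - c) \<bullet> w) > 0" using s0 neg by simp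
    ultimately show False by linarith
  qed
qed

lemma lin_alg:
  fixes a g :: "real^3"
  assumes "g \<noteq> 0" "norm a = R" "R > 0" "\<And>w. g \<bullet> w < 0 \<Longrightarrow> a \<bullet> w \<le> 0"
  shows "(1 / norm g) *\<^sub>R g = (1/R) *\<^sub>R a"
proof -
  define u where "u = (1 / norm g) *\<^sub>R g"
  have nu: "norm u = 1" using assms(1) by (simp add: u_def)
  have uu: "u \<bullet> u = 1" using nu by (simp add: norm_eq_1)
  have gu: "g \<bullet> w < 0" if "u \<bullet> w < 0" for w
    using assms(1) that unfolding u_def by (rule aux2)
  define p where "p = a - (a \<bullet> u) *\<^sub>R u"
  have pu: "p \<bullet> u = 0" by (simp add: p_def inner_diff_left uu)
  have key: "p \<bullet> p \<le> \<delta> * (a \<bullet> u)" if "\<delta> > 0" for \<delta>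
  proof -
    have "u \<bullet> (p - \<delta> *\<^sub>R u) < 0" using pu that uu by (simp add: inner_diff_right inner_commute)
    hence "a \<bullet> (p - \<delta> *\<^sub>R u) \<le> 0" using gu assms(4) by blast
    moreover have "a \<bullet> p = p \<bullet> p" unfolding p_def
      by (simp add: inner_diff_left inner_diff_right uu inner_commute)
    ultimately show ?thesis by (simp add: inner_diff_right)
  qed
  have au: "a \<bullet> u \<ge> 0"
  proof -
    have "u \<bullet> (- u) < 0" using uu by simp
    hence "a \<bullet> (-u) \<le> 0" using gu assms(4) by blast
    thus ?thesis by simp
  qed
  have "p \<bullet> p \<le> 0"
  proof (rule field_le_epsilon)
    fix e :: real assume e: "e > 0"
    show "p \<bullet> p \<le> 0 + e"
    proof (cases "a \<bullet> u = 0")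
      case True thus ?thesis using key[of 1] e by simp
    next
      case False
      hence "a \<bullet> u > 0" using au by simp
      thus ?thesis using key[of "e / (a \<bullet> u)"] e by simp
    qed
  qed
  hence "p \<bullet> p = 0" using inner_ge_zero[of p] by linarith
  hence p0: "p = 0" by simp
  hence a: "a = (a \<bullet> u) *\<^sub>R u" by (simp add: p_def)
  hence "norm a = \<bar>a \<bullet> u\<bar>" using nu by (metis norm_scaleR mult.right_neutral)
  hence "a \<bullet> u = R" using au assms(2) by simp
  hence "a = R *\<^sub>R u" using a by simp
  thus ?thesis using assms(3) by (simp add: u_def)
qed

theorem proposition2p7:
  shows "\<exists>C>0. \<forall>(\<Omega>::(real^3) set) n R.
           bounded_domain \<Omega> \<and> C2_boundary \<Omega> \<and> outward_unit_normal \<Omega> n \<and> R > 0 \<and>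
           circumscribed_sphere_cond \<Omega> R \<longrightarrow>
           (\<forall>v x. v \<noteq> 0 \<and> x \<in> frontier \<Omega> \<and> n x \<bullet> v < 0 \<longrightarrow>
              dist x (q_plus \<Omega> x v) \<le> C * R * N_fun n x v)"
proof (rule exI[of _ 2], intro conjI allI impI)
  fix \<Omega> :: "(real^3) set" and n R v x
  assume H: "bounded_domain \<Omega> \<and> C2_boundary \<Omega> \<and> outward_unit_normal \<Omega> n \<and> R > 0 \<and>
           circumscribed_sphere_cond \<Omega> R"
    and V: "v \<noteq> 0 \<and> x \<in> frontier \<Omega> \<and> n x \<bullet> v < 0"
  have op: "open \<Omega>" using H by (simp add: bounded_domain_def)
  have R0: "R > 0" using H by simp
  have xf: "x \<in> frontier \<Omega>" and v0: "v \<noteq> 0" and nv: "n x \<bullet> v < 0" using V by auto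
  obtain U \<rho> g where U: "x \<in> U" "C2_local_defining \<Omega> U \<rho> g" and nx: "n x = (1 / norm (g x)) *\<^sub>R g x"
    using H xf unfolding outward_unit_normal_def by blast
  obtain c where c: "dist x c = R" "closure \<Omega> \<subseteq> cball c R"
    using H xf unfolding circumscribed_sphere_cond_def by blast
  define a where "a = x - c"
  have na: "norm a = R" using c(1) by (simp add: a_def dist_norm)
  have g0: "g x \<noteq> 0" using U unfolding C2_local_defining_def by blast
  have "(1 / norm (g x)) *\<^sub>R g x = (1/R) *\<^sub>R a"
    using lin_alg[OF g0 na R0] inner_dir[OF op xf U(2) U(1) c(2) c(1)] by (simp add: a_def)
  hence nxa: "n x = (1/R) *\<^sub>R a" using nx by simp
  have av: "a \<bullet> v < 0" using nv R0 by (simp add: nxa divide_less_0_iff)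
  have vv: "v \<bullet> v > 0" using v0 by simp
  define T where "T = - 2 * (a \<bullet> v) / (v \<bullet> v)"
  have "- 2 * (a \<bullet> v) > 0" using av by simp
  hence T0: "T > 0" unfolding T_def using vv by (rule divide_pos_pos)
  define S where "S = {t. t > 0 \<and> x + t *\<^sub>R v \<notin> \<Omega>}"
  have out: "t \<in> S" if "t > T" for t
  proof -
    have e1: "(a + t *\<^sub>R v) \<bullet> (a + t *\<^sub>R v) = a \<bullet> a + 2 * t * (a \<bullet> v) + t^2 * (v \<bullet> v)"
      by (simp add: inner_add_left inner_add_right inner_commute power2_eq_square algebra_simps)
    have h: "2 * (a \<bullet> v) = - T * (v \<bullet> v)" using vv by (simp add: T_def)
    have h2: "2 * t * (a \<bullet> v) = t * (- T * (v \<bullet> v))" using h by (metis mult.assoc mult.commute)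
    have e2: "a \<bullet> a + 2 * t * (a \<bullet> v) + t^2 * (v \<bullet> v) = a \<bullet> a + t * (v \<bullet> v) * (t - T)"
      using h2 by (simp add: power2_eq_square algebra_simps)
    have "t * (v \<bullet> v) * (t - T) > 0" using that T0 vv by simp
    hence "(a + t *\<^sub>R v) \<bullet> (a + t *\<^sub>R v) > a \<bullet> a" using e1 e2 by linarith
    hence "\<not> norm (a + t *\<^sub>R v) \<le> norm a" by (simp add: norm_le)
    hence "norm (a + t *\<^sub>R v) > R" using na by simp
    hence "x + t *\<^sub>R v \<notin> cball c R" by (simp add: a_def dist_norm algebra_simps norm_minus_commute[of c])
    hence "x + t *\<^sub>R v \<notin> \<Omega>" using c(2) closure_subset by blast
    thus ?thesis using that T0 by (simp add: S_def)
  qed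
  have bdd: "bdd_below S" by (rule bdd_belowI[of _ 0]) (simp add: S_def)
  have IT: "Inf S \<le> T"
  proof (rule field_le_epsilon)
    fix e :: real assume "e > 0"
    hence "T + e \<in> S" using out by simp
    thus "Inf S \<le> T + e" using bdd by (rule cInf_lower)
  qed
  have I0: "Inf S \<ge> 0"
  proof (rule cInf_greatest)
    show "S \<noteq> {}" using out[of "T+1"] by auto
  qed (simp add: S_def)
  have "dist x (q_plus \<Omega> x v) = Inf S * norm v"
    using I0 by (simp add: q_plus_def S_def dist_norm)
  also have "\<dots> \<le> T * norm v" using IT by (simp add: mult_right_mono)
  also have "\<dots> = 2 * R * N_fun n x v"
    using R0 v0 by (simp add: T_def N_fun_def nxa power2_norm_eq_inner[symmetric] power2_eq_square field_simps)
  finally show "dist x (q_plus \<Omega> x v) \<le> 2 * R * N_fun n x v" .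
qed (simp)

end
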